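(* Let $\mathfrak g$ be a finite-dimensional complex simple Lie algebra, $\lambda\in P^+$, and $\boldsymbol\lambda=(\lambda_1,\lambda_2),\boldsymbol\mu=(\mu_1,\mu_2)\in P^+(\lambda,2)$. Then $\boldsymbol\lambda\sim\boldsymbol\mu$ if and only if $\boldsymbol\mu\in\{(\lambda_1,\lambda_2),(\lambda_2,\lambda_1)\}$.
   Context: $\mathfrak g$ has positive roots $R^+$, coroots $h_\alpha$, dominant integral weights $P^+$. $P^+(\lambda,2)=\{(\lambda_1,\lambda_2)\in(P^+)^2:\lambda_1+\lambda_2=\lambda\}$; $(\lambda_1,\lambda_2)\sim(\mu_1,\mu_2)$ means $\min\{\lambda_1(h_\alpha),\lambda_2(h_\alpha)\}=\min\{\mu_1(h_\alpha),\mu_2(h_\alpha)\}$ for all $\alpha\in R^+$. *)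

theory Defs
  imports "HOL-Analysis.Analysis"
begin

text \<open>A complex simple Lie algebra is represented by its root system: a finite, reduced,
crystallographic, irreducible root system in a real Euclidean space (the real span of the
roots in the dual of a Cartan subalgebra).  Weights are vectors of that space; the value
of a weight on the coroot h_alpha is the Cartan pairing 2 (x, alpha) / (alpha, alpha).\<close>

definition coroot_pairing :: "'a::real_inner \<Rightarrow> 'a \<Rightarrow> real" where
  "coroot_pairing x \<alpha> = 2 * (x \<bullet> \<alpha>) / (\<alpha> \<bullet> \<alpha>)"

definition root_reflection :: "'a::real_inner \<Rightarrow> 'a \<Rightarrow> 'a" where
  "root_reflection \<alpha> x = x - coroot_pairing x \<alpha> *\<^sub>R \<alpha>"

definition root_system :: "'a::euclidean_space set \<Rightarrow> bool" where
  "root_system R \<longleftrightarrow>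
     finite R \<and> 0 \<notin> R \<and> span R = UNIV \<and>
     (\<forall>\<alpha>\<in>R. \<forall>\<beta>\<in>R. root_reflection \<alpha> \<beta> \<in> R) \<and>
     (\<forall>\<alpha>\<in>R. \<forall>\<beta>\<in>R. coroot_pairing \<beta> \<alpha> \<in> \<int>) \<and>
     (\<forall>\<alpha>\<in>R. \<forall>c. c *\<^sub>R \<alpha> \<in> R \<longrightarrow> c = 1 \<or> c = -1)"

definition irreducible_root_system :: "'a::euclidean_space set \<Rightarrow> bool" where
  "irreducible_root_system R \<longleftrightarrow> R \<noteq> {} \<and>
     \<not> (\<exists>R1 R2. R1 \<union> R2 = R \<and> R1 \<noteq> {} \<and> R2 \<noteq> {} \<and>
            (\<forall>\<alpha>\<in>R1. \<forall>\<beta>\<in>R2. \<alpha> \<bullet> \<beta> = 0))"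

text \<open>A positive system is determined by a regular vector v (every positive system arises so).\<close>

definition regular_vector :: "'a::euclidean_space set \<Rightarrow> 'a \<Rightarrow> bool" where
  "regular_vector R v \<longleftrightarrow> (\<forall>\<alpha>\<in>R. v \<bullet> \<alpha> \<noteq> 0)"

definition pos_roots :: "'a::euclidean_space set \<Rightarrow> 'a \<Rightarrow> 'a set" where
  "pos_roots R v = {\<alpha>\<in>R. v \<bullet> \<alpha> > 0}"

definition dominant_weights :: "'a::euclidean_space set \<Rightarrow> 'a \<Rightarrow> 'a set" where
  "dominant_weights R v = {x. (\<forall>\<alpha>\<in>R. coroot_pairing x \<alpha> \<in> \<int>) \<and>
                              (\<forall>\<alpha>\<in>pos_roots R v. coroot_pairing x \<alpha> \<ge> 0)}"

definition P_plus_2 :: "'a::euclidean_space set \<Rightarrow> 'a \<Rightarrow> 'a \<Rightarrow> ('a \<times> 'a) set" where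
  "P_plus_2 R v lam = {(l1, l2). l1 \<in> dominant_weights R v \<and> l2 \<in> dominant_weights R v \<and>
                                 l1 + l2 = lam}"

definition min_equiv :: "'a::euclidean_space set \<Rightarrow> 'a \<Rightarrow> 'a \<times> 'a \<Rightarrow> 'a \<times> 'a \<Rightarrow> bool" where
  "min_equiv R v l m \<longleftrightarrow> (\<forall>\<alpha>\<in>pos_roots R v.
      min (coroot_pairing (fst l) \<alpha>) (coroot_pairing (snd l) \<alpha>) =
      min (coroot_pairing (fst m) \<alpha>) (coroot_pairing (snd m) \<alpha>))"

end

theory Submission
  imports Defs
begin

lemma refl_inner: "f \<bullet> root_reflection \<gamma> x = f \<bullet> x - coroot_pairing x \<gamma> * (f \<bullet> \<gamma>)"
  by (simp add: root_reflection_def inner_diff_right)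

lemma cp_nz: "\<gamma> \<noteq> 0 \<Longrightarrow> x \<bullet> \<gamma> \<noteq> 0 \<Longrightarrow> coroot_pairing x \<gamma> \<noteq> 0"
  by (simp add: coroot_pairing_def)

lemma zero_if_orth:
  fixes f :: "'a::euclidean_space"
  assumes "span R = UNIV" "\<forall>\<alpha>\<in>R. f \<bullet> \<alpha> = 0"
  shows "f = 0"
proof -
  have "orthogonal f f"
    by (rule orthogonal_to_span) (use assms in \<open>auto simp: orthogonal_def\<close>)
  thus ?thesis by (simp add: orthogonal_def)
qed

lemma two_hyper:
  fixes R :: "'a::euclidean_space set" and f g :: 'a
  assumes rs: "root_system R" and irr: "irreducible_root_system R"
    and cov: "\<forall>\<alpha>\<in>R. f \<bullet> \<alpha> = 0 \<or> g \<bullet> \<alpha> = 0"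
  shows "f = 0 \<or> g = 0"
proof (rule ccontr)
  assume "\<not> (f = 0 \<or> g = 0)"
  hence fn: "f \<noteq> 0" and gn: "g \<noteq> 0" by auto
  have z: "0 \<notin> R" and rc: "\<And>a b. a \<in> R \<Longrightarrow> b \<in> R \<Longrightarrow> root_reflection a b \<in> R"
    and sp: "span R = UNIV" using rs by (auto simp: root_system_def)
  define R1 where "R1 = {\<alpha>\<in>R. f \<bullet> \<alpha> \<noteq> 0}"
  define R2 where "R2 = {\<alpha>\<in>R. g \<bullet> \<alpha> \<noteq> 0}"
  define Z where "Z = {\<gamma>\<in>R. f \<bullet> \<gamma> = 0 \<and> g \<bullet> \<gamma> = 0 \<and> (\<exists>\<beta>\<in>R2. \<gamma> \<bullet> \<beta> \<noteq> 0)}"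
  have R1ne: "R1 \<noteq> {}"
    using zero_if_orth[OF sp, of f] fn by (auto simp: R1_def)
  have R2ne: "R2 \<noteq> {}"
    using zero_if_orth[OF sp, of g] gn by (auto simp: R2_def)
  have R12: "\<forall>\<alpha>\<in>R1. \<forall>\<beta>\<in>R2. \<alpha> \<bullet> \<beta> = 0"
  proof (intro ballI, rule ccontr)
    fix \<alpha> \<beta> assume a: "\<alpha> \<in> R1" and b: "\<beta> \<in> R2" and ne: "\<alpha> \<bullet> \<beta> \<noteq> 0"
    have fb: "f \<bullet> \<beta> = 0" using cov b by (auto simp: R2_def)
    have ga: "g \<bullet> \<alpha> = 0" using cov a by (auto simp: R1_def)
    have bz: "\<beta> \<noteq> 0" using z b by (auto simp: R2_def)
    have c: "coroot_pairing \<alpha> \<beta> \<noteq> 0" using cp_nz[OF bz ne] .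
    have inR: "root_reflection \<beta> \<alpha> \<in> R" using a b rc by (auto simp: R1_def R2_def)
    have "f \<bullet> root_reflection \<beta> \<alpha> \<noteq> 0" using a fb by (simp add: refl_inner R1_def)
    hence "g \<bullet> root_reflection \<beta> \<alpha> = 0" using cov inR by auto
    moreover have "g \<bullet> root_reflection \<beta> \<alpha> \<noteq> 0" using ga c b by (simp add: refl_inner R2_def)
    ultimately show False by simp
  qed
  have R1Z: "\<forall>\<alpha>\<in>R1. \<forall>\<gamma>\<in>Z. \<alpha> \<bullet> \<gamma> = 0"
  proof (intro ballI, rule ccontr)
    fix \<alpha> \<gamma> assume a: "\<alpha> \<in> R1" and g': "\<gamma> \<in> Z" and ne: "\<alpha> \<bullet> \<gamma> \<noteq> 0"
    obtain \<beta> where b: "\<beta> \<in> R2" and gb: "\<gamma> \<bullet> \<beta> \<noteq> 0" using g' by (auto simp: Z_def)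
    have gz: "\<gamma> \<noteq> 0" using z g' by (auto simp: Z_def)
    have c: "coroot_pairing \<alpha> \<gamma> \<noteq> 0" using cp_nz[OF gz ne] .
    have inR: "root_reflection \<gamma> \<alpha> \<in> R" using a g' rc by (auto simp: R1_def Z_def)
    have "f \<bullet> root_reflection \<gamma> \<alpha> \<noteq> 0" using a g' by (simp add: refl_inner R1_def Z_def)
    hence r1: "root_reflection \<gamma> \<alpha> \<in> R1" using inR by (simp add: R1_def)
    have ab: "\<alpha> \<bullet> \<beta> = 0" using R12 a b by auto
    have "root_reflection \<gamma> \<alpha> \<bullet> \<beta> = \<alpha> \<bullet> \<beta> - coroot_pairing \<alpha> \<gamma> * (\<gamma> \<bullet> \<beta>)"
      using refl_inner[of \<beta> \<gamma> \<alpha>] by (simp add: inner_commute)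
    also have "\<dots> \<noteq> 0" using ab c gb by simp
    finally show False using R12 r1 b by auto
  qed
  have ZZ: "\<forall>\<gamma>\<in>R - R1 - R2 - Z. \<forall>\<gamma>'\<in>Z. \<gamma> \<bullet> \<gamma>' = 0"
  proof (intro ballI, rule ccontr)
    fix \<gamma> \<gamma>' assume g: "\<gamma> \<in> R - R1 - R2 - Z" and g': "\<gamma>' \<in> Z" and ne: "\<gamma> \<bullet> \<gamma>' \<noteq> 0"
    have gR2: "\<forall>\<beta>\<in>R2. \<gamma> \<bullet> \<beta> = 0" using g by (auto simp: Z_def R1_def R2_def)
    obtain \<beta> where b: "\<beta> \<in> R2" and gb: "\<gamma>' \<bullet> \<beta> \<noteq> 0" using g' by (auto simp: Z_def)
    have gz: "\<gamma>' \<noteq> 0" using z g' by (auto simp: Z_def)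
    have c: "coroot_pairing \<beta> \<gamma>' \<noteq> 0" using cp_nz[OF gz] gb by (simp add: inner_commute)
    have inR: "root_reflection \<gamma>' \<beta> \<in> R" using b g' rc by (auto simp: R2_def Z_def)
    have "g \<bullet> root_reflection \<gamma>' \<beta> \<noteq> 0" using b g' by (simp add: refl_inner R2_def Z_def)
    hence r2: "root_reflection \<gamma>' \<beta> \<in> R2" using inR by (simp add: R2_def)
    have "\<gamma> \<bullet> root_reflection \<gamma>' \<beta> = \<gamma> \<bullet> \<beta> - coroot_pairing \<beta> \<gamma>' * (\<gamma> \<bullet> \<gamma>')"
      by (rule refl_inner)
    also have "\<dots> \<noteq> 0" using gR2 b c ne by simp
    finally show False using gR2 r2 by auto
  qed
  have ZR2: "\<forall>\<gamma>\<in>R - R1 - R2 - Z. \<forall>\<beta>\<in>R2. \<gamma> \<bullet> \<beta> = 0"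
    by (auto simp: Z_def R1_def R2_def)
  have "R1 \<union> (R - R1 - R2 - Z) \<union> (R2 \<union> Z) = R"
    by (auto simp: R1_def R2_def Z_def)
  moreover have "\<forall>\<alpha>\<in>R1 \<union> (R - R1 - R2 - Z). \<forall>\<beta>\<in>R2 \<union> Z. \<alpha> \<bullet> \<beta> = 0"
    using R12 R1Z ZZ ZR2 by blast
  ultimately show False using irr R1ne R2ne unfolding irreducible_root_system_def
    by (metis (no_types, lifting) Un_empty Un_assoc)
qed

lemma cp_add: "coroot_pairing (x + y) a = coroot_pairing x a + coroot_pairing y a"
  by (simp add: coroot_pairing_def inner_add_left add_divide_distrib)

lemma cp_diff: "coroot_pairing (x - y) a = coroot_pairing x a - coroot_pairing y a"
  by (simp add: coroot_pairing_def inner_diff_left diff_divide_distrib)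

theorem lemma5p5:
  fixes R :: "'a::euclidean_space set" and v lam l1 l2 m1 m2 :: 'a
  assumes "root_system R" and "irreducible_root_system R" and "regular_vector R v"
    and "lam \<in> dominant_weights R v"
    and "(l1, l2) \<in> P_plus_2 R v lam" and "(m1, m2) \<in> P_plus_2 R v lam"
  shows "min_equiv R v (l1, l2) (m1, m2) \<longleftrightarrow> (m1, m2) \<in> {(l1, l2), (l2, l1)}"
proof
  assume "(m1, m2) \<in> {(l1, l2), (l2, l1)}"
  thus "min_equiv R v (l1, l2) (m1, m2)" by (auto simp: min_equiv_def min.commute)
next
  assume me: "min_equiv R v (l1, l2) (m1, m2)"
  have sl: "l1 + l2 = lam" and sm: "m1 + m2 = lam" using assms(5,6) by (auto simp: P_plus_2_def)
  have z: "0 \<notin> R" and rc: "\<And>a b. a \<in> R \<Longrightarrow> b \<in> R \<Longrightarrow> root_reflection a b \<in> R"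
    using assms(1) by (auto simp: root_system_def)
  define d where "d = l1 - l2"
  define e where "e = m1 - m2"
  have key: "(e - d) \<bullet> \<beta> = 0 \<or> (e + d) \<bullet> \<beta> = 0" if b: "\<beta> \<in> pos_roots R v" for \<beta>
  proof -
    have bz: "\<beta> \<bullet> \<beta> \<noteq> 0" using b z by (auto simp: pos_roots_def)
    have mn: "min (coroot_pairing l1 \<beta>) (coroot_pairing l2 \<beta>) =
              min (coroot_pairing m1 \<beta>) (coroot_pairing m2 \<beta>)"
      using me b by (auto simp: min_equiv_def)
    have sm': "coroot_pairing l1 \<beta> + coroot_pairing l2 \<beta> = coroot_pairing m1 \<beta> + coroot_pairing m2 \<beta>"
      using sl sm cp_add by metis
    have "coroot_pairing e \<beta> = coroot_pairing d \<beta> \<or> coroot_pairing e \<beta> = - coroot_pairing d \<beta>"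
      using mn sm' unfolding e_def d_def cp_diff by (auto simp: min_def split: if_splits)
    hence "e \<bullet> \<beta> = d \<bullet> \<beta> \<or> e \<bullet> \<beta> = - (d \<bullet> \<beta>)"
      using bz by (auto simp: coroot_pairing_def field_simps)
    thus ?thesis by (auto simp: inner_diff_left inner_add_left)
  qed
  have cov: "\<forall>\<alpha>\<in>R. (e - d) \<bullet> \<alpha> = 0 \<or> (e + d) \<bullet> \<alpha> = 0"
  proof
    fix \<alpha> assume a: "\<alpha> \<in> R"
    have az: "\<alpha> \<bullet> \<alpha> \<noteq> 0" using a z by auto
    have "root_reflection \<alpha> \<alpha> = - \<alpha>"
      using az by (simp add: root_reflection_def coroot_pairing_def scaleR_2[symmetric] algebra_simps)
    hence na: "- \<alpha> \<in> R" using rc[OF a a] by simp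
    have "v \<bullet> \<alpha> \<noteq> 0" using assms(3) a by (auto simp: regular_vector_def)
    hence "\<alpha> \<in> pos_roots R v \<or> - \<alpha> \<in> pos_roots R v"
      using a na by (auto simp: pos_roots_def)
    thus "(e - d) \<bullet> \<alpha> = 0 \<or> (e + d) \<bullet> \<alpha> = 0" using key by fastforce
  qed
  have "e - d = 0 \<or> e + d = 0" by (rule two_hyper[OF assms(1,2) cov])
  thus "(m1, m2) \<in> {(l1, l2), (l2, l1)}"
  proof
    assume "e - d = 0"
    hence h: "m1 - m2 = l1 - l2" by (simp add: e_def d_def)
    have "(2::real) *\<^sub>R m1 = (m1 - m2) + (m1 + m2)" by (simp add: scaleR_2)
    also have "\<dots> = (l1 - l2) + (l1 + l2)" using h sl sm by simp
    also have "\<dots> = (2::real) *\<^sub>R l1" by (simp add: scaleR_2)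
    finally have "m1 = l1" by simp
    moreover have "m2 = l2" using calculation sl sm by (metis add_left_cancel)
    ultimately show ?thesis by simp
  next
    assume "e + d = 0"
    hence h: "m1 - m2 = l2 - l1" by (simp add: e_def d_def algebra_simps)
    have "(2::real) *\<^sub>R m1 = (m1 - m2) + (m1 + m2)" by (simp add: scaleR_2)
    also have "\<dots> = (l2 - l1) + (l1 + l2)" using h sl sm by simp
    also have "\<dots> = (2::real) *\<^sub>R l2" by (simp add: scaleR_2)
    finally have "m1 = l2" by simp
    moreover have "m2 = l1" using calculation sl sm by (metis add.commute add_left_cancel)
    ultimately show ?thesis by simp
  qed
qed

end
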